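(* Let $E$ be a finite set and $V \subset \mathbb R^E$ a linear subspace with oriented matroid $M$. Define an equivalence relation on the set of all triples $(F,G,T)$, where $T$ is a tope of $M$ and $F \subset G$ are flats relatively acyclic in $T$, by $(F,G,T) \sim (F',G',T')$ if and only if $(F,G) = (F',G')$ and $\pi_{G \setminus F}(T) = \pi_{G \setminus F}(T')$. Then for two such triples, ${}_T\mathcal Y_{FG}^\circ \cap {}_{T'}\mathcal Y_{F'G'}^\circ$ is empty unless $(F,G,T) \sim (F',G',T')$, in which case ${}_T\mathcal Y_{FG}^\circ = {}_{T'}\mathcal Y_{F'G'}^\circ$.
   Context: $\mathbb P^1_{\mathbb R}=\mathbb R\cup\{\infty\}$ with analytic topology. The sign map $s:\mathbb R^E\to\{-,0,+\}^E$ records signs of coordinates; the covectors of $M$ are $\{s(v):v\in V\}$; for a signed set $X$, $X^-,X^0,X^+$ are the coordinates with value $-,0,+$; $X\le Y$ means $X^+\subset Y^+$, $X^-\subset Y^-$; topes are maximal covectors; flats are the sets $X^0$. A flat is relatively acyclic in a tope $T$ if it equals $X^0$ for a covector $X\le T$. $\pi_A$ denotes restriction of a signed set (or vector) to the coordinates in $A$. ${}_T\mathcal Y_V$ is the closure of $s^{-1}(T)\cap V$ in $(\mathbb P^1_{\mathbb R})^E$, and ${}_T\mathcal Y_{FG}^\circ := {}_T\mathcal Y_V \cap (0^F\times\mathbb R_{>0}^{(G\setminus F)\cap T^+}\times\mathbb R_{<0}^{(G\setminus F)\cap T^-}\times\infty^{E\setminus G})$, i.e. points of ${}_T\mathcal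 Y_V$ with coordinates $0$ on $F$, positive on $(G\setminus F)\cap T^+$, negative on $(G\setminus F)\cap T^-$, and $\infty$ on $E\setminus G$. *)

theory Defs
  imports "HOL-Analysis.Analysis"
begin

definition lin_subspace :: "('e \<Rightarrow> real) set \<Rightarrow> bool" where
  "lin_subspace V \<longleftrightarrow> (\<lambda>e. 0) \<in> V \<and>
     (\<forall>v\<in>V. \<forall>w\<in>V. (\<lambda>e. v e + w e) \<in> V) \<and>
     (\<forall>c. \<forall>v\<in>V. (\<lambda>e. c * v e) \<in> V)"

datatype sign = Neg | Zero | Pos

definition sgn_of :: "real \<Rightarrow> sign" where
  "sgn_of x = (if x < 0 then Neg else if x = 0 then Zero else Pos)"

definition sign_map :: "('e \<Rightarrow> real) \<Rightarrow> ('e \<Rightarrow> sign)" where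
  "sign_map v = (\<lambda>e. sgn_of (v e))"

definition covectors :: "('e \<Rightarrow> real) set \<Rightarrow> ('e \<Rightarrow> sign) set" where
  "covectors V = sign_map ` V"

definition pos_part :: "('e \<Rightarrow> sign) \<Rightarrow> 'e set" where "pos_part X = {e. X e = Pos}"
definition neg_part :: "('e \<Rightarrow> sign) \<Rightarrow> 'e set" where "neg_part X = {e. X e = Neg}"
definition zero_part :: "('e \<Rightarrow> sign) \<Rightarrow> 'e set" where "zero_part X = {e. X e = Zero}"

definition sign_le :: "('e \<Rightarrow> sign) \<Rightarrow> ('e \<Rightarrow> sign) \<Rightarrow> bool" where
  "sign_le X Y \<longleftrightarrow> pos_part X \<subseteq> pos_part Y \<and> neg_part X \<subseteq> neg_part Y"

definition is_tope :: "('e \<Rightarrow> real) set \<Rightarrow> ('e \<Rightarrow> sign) \<Rightarrow> bool" where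
  "is_tope V T \<longleftrightarrow> T \<in> covectors V \<and>
     (\<forall>Y\<in>covectors V. sign_le T Y \<longrightarrow> Y = T)"

definition is_flat :: "('e \<Rightarrow> real) set \<Rightarrow> 'e set \<Rightarrow> bool" where
  "is_flat V F \<longleftrightarrow> (\<exists>X\<in>covectors V. F = zero_part X)"

definition rel_acyclic :: "('e \<Rightarrow> real) set \<Rightarrow> ('e \<Rightarrow> sign) \<Rightarrow> 'e set \<Rightarrow> bool" where
  "rel_acyclic V T F \<longleftrightarrow> (\<exists>X\<in>covectors V. sign_le X T \<and> F = zero_part X)"

text \<open>P^1_R = R \<union> {\<infinity>} as real option (None = \<infinity>), with the analytic topology
  (one-point compactification of R).\<close>
definition P1_open :: "real option set \<Rightarrow> bool" where
  "P1_open U \<longleftrightarrow> open (Some -` U) \<and>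
     (None \<in> U \<longrightarrow> (\<exists>r. \<forall>x. r < \<bar>x\<bar> \<longrightarrow> Some x \<in> U))"

lemma istopology_P1: "istopology P1_open"
  unfolding istopology_def
proof (intro conjI allI impI)
  fix S T assume S: "P1_open S" and T: "P1_open T"
  show "P1_open (S \<inter> T)"
    unfolding P1_open_def
  proof (intro conjI impI)
    show "open (Some -` (S \<inter> T))" using S T unfolding P1_open_def
      by (simp add: vimage_Int open_Int)
  next
    assume "None \<in> S \<inter> T"
    then obtain r s where "\<forall>x. r < \<bar>x\<bar> \<longrightarrow> Some x \<in> S" "\<forall>x. s < \<bar>x\<bar> \<longrightarrow> Some x \<in> T"
      using S T unfolding P1_open_def by auto
    then show "\<exists>r. \<forall>x. r < \<bar>x\<bar> \<longrightarrow> Some x \<in> S \<inter> T"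
      by (intro exI[of _ "max r s"]) auto
  qed
next
  fix K assume K: "\<forall>S\<in>K. P1_open S"
  show "P1_open (\<Union>K)"
    unfolding P1_open_def
  proof (intro conjI impI)
    have "Some -` (\<Union>K) = (\<Union>S\<in>K. Some -` S)" by auto
    then show "open (Some -` (\<Union>K))" using K unfolding P1_open_def by auto
  next
    assume "None \<in> \<Union>K"
    then obtain S where "S \<in> K" "None \<in> S" by auto
    then obtain r where "\<forall>x. r < \<bar>x\<bar> \<longrightarrow> Some x \<in> S"
      using K unfolding P1_open_def by auto
    then show "\<exists>r. \<forall>x. r < \<bar>x\<bar> \<longrightarrow> Some x \<in> \<Union>K"
      using \<open>S \<in> K\<close> by blast
  qed
qed

definition P1_topology :: "real option topology" where
  "P1_topology = topology P1_open"

definition P1E_topology :: "('e \<Rightarrow> real option) topology" where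
  "P1E_topology = product_topology (\<lambda>_. P1_topology) UNIV"

definition Y_V :: "('e \<Rightarrow> real) set \<Rightarrow> ('e \<Rightarrow> sign) \<Rightarrow> ('e \<Rightarrow> real option) set" where
  "Y_V V T = P1E_topology closure_of ((\<lambda>v e. Some (v e)) ` {v\<in>V. sign_map v = T})"

definition Y_open_stratum ::
  "('e \<Rightarrow> real) set \<Rightarrow> ('e \<Rightarrow> sign) \<Rightarrow> 'e set \<Rightarrow> 'e set \<Rightarrow> ('e \<Rightarrow> real option) set" where
  "Y_open_stratum V T F G = Y_V V T \<inter>
     {y. (\<forall>e\<in>F. y e = Some 0) \<and>
         (\<forall>e\<in>(G - F) \<inter> pos_part T. \<exists>r>0. y e = Some r) \<and>
         (\<forall>e\<in>(G - F) \<inter> neg_part T. \<exists>r<0. y e = Some r) \<and>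
         (\<forall>e\<in>- G. y e = None)}"

definition triple_equiv ::
  "'e set \<times> 'e set \<times> ('e \<Rightarrow> sign) \<Rightarrow> 'e set \<times> 'e set \<times> ('e \<Rightarrow> sign) \<Rightarrow> bool" where
  "triple_equiv t t' = (case t of (F, G, T) \<Rightarrow> case t' of (F', G', T') \<Rightarrow>
     F = F' \<and> G = G' \<and> (\<forall>e\<in>G - F. T e = T' e))"

definition admissible_triple :: "('e \<Rightarrow> real) set \<Rightarrow> 'e set \<times> 'e set \<times> ('e \<Rightarrow> sign) \<Rightarrow> bool" where
  "admissible_triple V t = (case t of (F, G, T) \<Rightarrow>
     is_tope V T \<and> F \<subseteq> G \<and> is_flat V F \<and> is_flat V G \<and>
     rel_acyclic V T F \<and> rel_acyclic V T G)"

end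

theory Submission imports Defs begin

lemma sgn_of_add_small: "\<bar>d\<bar> < \<bar>a\<bar> \<Longrightarrow> sgn_of (a + d) = sgn_of a"
  unfolding sgn_of_def by (auto split: if_splits simp: abs_if)

lemma sgn_of_scale: "(c::real) > 0 \<Longrightarrow> sgn_of (c * x) = sgn_of x"
  unfolding sgn_of_def by (auto simp: mult_less_0_iff)

lemma P1_openin: "openin P1_topology = P1_open"
  unfolding P1_topology_def using istopology_P1 by simp

lemma P1_open_UNIV: "P1_open UNIV"
  unfolding P1_open_def by auto

lemma topspace_P1: "topspace P1_topology = UNIV"
  using P1_open_UNIV unfolding topspace_def P1_openin by auto

lemma topspace_P1E: "topspace P1E_topology = UNIV"
  unfolding P1E_topology_def topspace_product_topology topspace_P1 by auto

lemma P1_open_ball: "P1_open (Some ` ball c d)"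
  proof -
  have "Some -` (Some ` ball c d) = ball c d" by auto
  then show ?thesis unfolding P1_open_def by auto
qed

lemma racyc:
  assumes "rel_acyclic V T F"
  obtains x where "x \<in> V" "\<And>e. e \<in> F \<longleftrightarrow> x e = 0"
    "\<And>e. e \<notin> F \<Longrightarrow> sgn_of (x e) = T e" "\<And>e. e \<notin> F \<Longrightarrow> T e \<noteq> Zero"
proof -
  obtain X where X: "X \<in> covectors V" "sign_le X T" "F = zero_part X"
    using assms unfolding rel_acyclic_def by auto
  then obtain x where x: "x \<in> V" "X = sign_map x" unfolding covectors_def by auto
  have 1: "e \<in> F \<longleftrightarrow> x e = 0" for e
    using X x unfolding zero_part_def sign_map_def sgn_of_def by auto
  have 2: "sgn_of (x e) = T e" if "e \<notin> F" for e
  proof -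
    have "x e \<noteq> 0" using 1 that by auto
    then show ?thesis using X(2) x(2) unfolding sign_le_def pos_part_def neg_part_def sign_map_def sgn_of_def
      by (auto split: if_splits)
  qed
  have 3: "T e \<noteq> Zero" if "e \<notin> F" for e
  proof -
    have "x e \<noteq> 0" using 1 that by auto
    then show ?thesis using 2[OF that] unfolding sgn_of_def by (auto split: if_splits)
  qed
  show ?thesis using that x(1) 1 2 3 by blast
qed

lemma lift:
  fixes V :: "('e::finite \<Rightarrow> real) set"
  assumes lin: "lin_subspace V" and yY: "y \<in> Y_V V T" and yG: "\<forall>e\<in>G. y e \<noteq> None"
  shows "\<exists>q\<in>V. \<forall>e\<in>G. y e = Some (q e)"
proof (rule ccontr)
  assume nq: "\<not> ?thesis"
  define \<Phi> :: "('e \<Rightarrow> real) \<Rightarrow> real^'e" where "\<Phi> v = (\<chi> e. if e \<in> G then v e else 0)" for v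
  define p :: "real^'e" where "p = (\<chi> e. if e \<in> G then the (y e) else 0)"
  define W where "W = \<Phi> ` V"
  have "subspace W"
    unfolding subspace_def W_def
  proof (intro conjI ballI allI)
    show "0 \<in> \<Phi> ` V"
      using lin unfolding lin_subspace_def
      by (intro image_eqI[of _ _ "\<lambda>e. 0"]) (auto simp: \<Phi>_def vec_eq_iff)
  next
    fix a b assume "a \<in> \<Phi> ` V" "b \<in> \<Phi> ` V"
    then obtain u v where uv: "u \<in> V" "v \<in> V" "a = \<Phi> u" "b = \<Phi> v" by auto
    then show "a + b \<in> \<Phi> ` V" using lin unfolding lin_subspace_def
      by (intro image_eqI[of _ _ "\<lambda>e. u e + v e"]) (auto simp: \<Phi>_def vec_eq_iff)
  next
    fix c :: real and a assume "a \<in> \<Phi> ` V"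
    then obtain u where uv: "u \<in> V" "a = \<Phi> u" by auto
    then show "c *\<^sub>R a \<in> \<Phi> ` V" using lin unfolding lin_subspace_def
      by (intro image_eqI[of _ _ "\<lambda>e. c * u e"]) (auto simp: \<Phi>_def vec_eq_iff)
  qed
  then have "closed W" by (rule closed_subspace)
  have "p \<notin> W"
  proof
    assume "p \<in> W"
    then obtain v where v: "v \<in> V" "p = \<Phi> v" unfolding W_def by auto
    have "\<forall>e\<in>G. y e = Some (v e)"
    proof
      fix e assume e: "e \<in> G"
      have "p $ e = v e" using v e by (simp add: \<Phi>_def)
      moreover have "p $ e = the (y e)" using e by (simp add: p_def)
      ultimately show "y e = Some (v e)" using yG e by auto
    qed
    then show False using nq v by auto
  qed
  then obtain \<delta> where \<delta>: "\<delta> > 0" "ball p \<delta> \<inter> W = {}"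
  proof -
    have "open (- W)" using \<open>closed W\<close> by (simp add: closed_def)
    then obtain e where "e > 0" "\<forall>x. dist x p < e \<longrightarrow> x \<in> - W"
      using \<open>p \<notin> W\<close> unfolding open_dist by blast
    moreover have "ball p e \<inter> W = {}" using \<open>\<forall>x. dist x p < e \<longrightarrow> x \<in> - W\<close> by (auto simp: dist_commute)
    ultimately show ?thesis using that by blast
  qed
  define d where "d = \<delta> / (real CARD('e) + 1)"
  have d: "d > 0" "real CARD('e) * d < \<delta>"
    using \<delta> by (auto simp: d_def field_simps)
  define U where "U = (\<Pi>\<^sub>E e\<in>UNIV. if e \<in> G then Some ` ball (p $ e) d else UNIV)"
  have "openin P1E_topology U"
    unfolding U_def P1E_topology_def
    by (rule product_topology_basis) (auto simp: P1_openin P1_open_ball P1_open_UNIV)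
  moreover have "y \<in> U"
    using yG d unfolding U_def p_def by (auto simp: PiE_iff)
  ultimately obtain z where z: "z \<in> (\<lambda>v e. Some (v e)) ` {v\<in>V. sign_map v = T}" "z \<in> U"
    using yY unfolding Y_V_def in_closure_of by blast
  then obtain v where v: "v \<in> V" "z = (\<lambda>e. Some (v e))" by auto
  have comp: "\<bar>(\<Phi> v - p) $ e\<bar> \<le> d" for e
  proof (cases "e \<in> G")
    case True
    then have "Some (v e) \<in> Some ` ball (p $ e) d" proof -
      have "z e \<in> (if e \<in> G then Some ` ball (p $ e) d else UNIV)" using z(2) unfolding U_def by (simp add: PiE_iff)
      then show ?thesis using True v by simp
    qed
    then have "dist (p $ e) (v e) < d" by auto
    then show ?thesis using True by (simp add: \<Phi>_def dist_real_def)
  next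
    case False then show ?thesis using d by (simp add: \<Phi>_def p_def)
  qed
  have "norm (\<Phi> v - p) \<le> (\<Sum>e\<in>UNIV. \<bar>(\<Phi> v - p) $ e\<bar>)" by (rule norm_le_l1_cart)
  also have "\<dots> \<le> (\<Sum>e\<in>(UNIV::'e set). d)" by (rule sum_mono) (rule comp)
  also have "\<dots> = real CARD('e) * d" by simp
  finally have "dist (\<Phi> v) p < \<delta>" using d by (simp add: dist_norm)
  then have "\<Phi> v \<in> ball p \<delta> \<inter> W" using v unfolding W_def by (auto simp: dist_commute)
  then show False using \<delta> by auto
qed

lemma finite_choice_pos:
  fixes P :: "'e \<Rightarrow> real \<Rightarrow> bool"
  assumes "finite A" and "\<forall>e\<in>A. \<exists>r>0. P e r" and mono: "\<And>e r s. P e r \<Longrightarrow> 0 < s \<Longrightarrow> s \<le> r \<Longrightarrow> P e s"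
  shows "\<exists>\<rho>>0. \<forall>e\<in>A. P e \<rho>"
proof -
  obtain rf where rf: "\<forall>e\<in>A. rf e > 0 \<and> P e (rf e)" using assms(2) by metis
  define \<rho> where "\<rho> = Min (insert 1 (rf ` A))"
  have "\<rho> > 0" unfolding \<rho>_def using assms(1) rf by (subst Min_gr_iff) auto
  moreover have "\<rho> \<le> rf e" if "e \<in> A" for e unfolding \<rho>_def using assms(1) that by (intro Min_le) auto
  ultimately show ?thesis using rf mono by blast
qed

lemma move:
  fixes V :: "('e::finite \<Rightarrow> real) set"
  assumes lin: "lin_subspace V" and tope: "is_tope V T'"
  and aF: "rel_acyclic V T F" and aG': "rel_acyclic V T' G"
  and FG: "F \<subseteq> G" and eq: "\<forall>e\<in>G-F. T e = T' e"
  and y: "y \<in> Y_open_stratum V T F G"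
  shows "y \<in> Y_open_stratum V T' F G"
proof -
  have yY: "y \<in> Y_V V T" and yF: "\<forall>e\<in>F. y e = Some 0"
    and yP: "\<forall>e\<in>(G-F)\<inter>pos_part T. \<exists>r>0. y e = Some r"
    and yN: "\<forall>e\<in>(G-F)\<inter>neg_part T. \<exists>r<0. y e = Some r"
    and yI: "\<forall>e\<in>-G. y e = None" using y unfolding Y_open_stratum_def by auto
  obtain xF where xF: "\<And>e. e \<notin> F \<Longrightarrow> T e \<noteq> Zero" using racyc[OF aF] by metis
  have yG: "\<forall>e\<in>G. y e \<noteq> None"
  proof
    fix e assume e: "e \<in> G"
    show "y e \<noteq> None"
    proof (cases "e \<in> F")
      case True then show ?thesis using yF by auto
    next
      case False
      then have "T e = Pos \<or> T e = Neg" using xF by (cases "T e") auto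
      then show ?thesis using yP yN e False unfolding pos_part_def neg_part_def by auto
    qed
  qed
  obtain q where q: "q \<in> V" "\<forall>e\<in>G. y e = Some (q e)" using lift[OF lin yY yG] by blast
  have qF: "\<forall>e\<in>F. q e = 0" using q yF FG by (metis option.inject subsetD)
  have qS: "q e \<noteq> 0 \<and> sgn_of (q e) = T' e" if e: "e \<in> G - F" for e
  proof -
    have disj: "T e = Pos \<or> T e = Neg" using xF e by (cases "T e") auto
    have qe: "y e = Some (q e)" "T e = T' e" using e q eq by auto
    from disj show ?thesis
    proof
      assume "T e = Pos"
      then obtain r where "r > 0" "y e = Some r" using yP e unfolding pos_part_def by auto
      then show ?thesis using qe \<open>T e = Pos\<close> unfolding sgn_of_def by auto
    next
      assume "T e = Neg"
      then obtain r where "r < 0" "y e = Some r" using yN e unfolding neg_part_def by auto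
      then show ?thesis using qe \<open>T e = Neg\<close> unfolding sgn_of_def by auto
    qed
  qed
  obtain t where t: "t \<in> V" "sign_map t = T'" using tope unfolding is_tope_def covectors_def by auto
  obtain g where g: "g \<in> V" "\<And>e. e \<in> G \<longleftrightarrow> g e = 0" "\<And>e. e \<notin> G \<Longrightarrow> sgn_of (g e) = T' e"
    using racyc[OF aG'] by metis
  have stratum_cond: "{y. (\<forall>e\<in>F. y e = Some 0) \<and>
         (\<forall>e\<in>(G - F) \<inter> pos_part T. \<exists>r>0. y e = Some r) \<and>
         (\<forall>e\<in>(G - F) \<inter> neg_part T. \<exists>r<0. y e = Some r) \<and>
         (\<forall>e\<in>- G. y e = None)} = {y. (\<forall>e\<in>F. y e = Some 0) \<and>
         (\<forall>e\<in>(G - F) \<inter> pos_part T'. \<exists>r>0. y e = Some r) \<and>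
         (\<forall>e\<in>(G - F) \<inter> neg_part T'. \<exists>r<0. y e = Some r) \<and>
         (\<forall>e\<in>- G. y e = None)}"
  proof -
    have "(G - F) \<inter> pos_part T = (G - F) \<inter> pos_part T'" "(G - F) \<inter> neg_part T = (G - F) \<inter> neg_part T'"
      using eq unfolding pos_part_def neg_part_def by auto
    then show ?thesis by simp
  qed
  have "y \<in> Y_V V T'"
    unfolding Y_V_def in_closure_of topspace_P1E
  proof (intro conjI allI impI UNIV_I)
    fix U assume U: "y \<in> U \<and> openin P1E_topology U"
    then obtain W where W: "\<forall>i\<in>UNIV. openin P1_topology (W i)" "y \<in> Pi\<^sub>E UNIV W" "Pi\<^sub>E UNIV W \<subseteq> U"
      unfolding P1E_topology_def openin_product_topology_alt by blast
    have Wo: "P1_open (W e)" for e using W(1) by (simp add: P1_openin)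
    have yW: "y e \<in> W e" for e using W(2) by (simp add: PiE_iff)
    have "\<exists>r>0. \<forall>x. \<bar>x - q e\<bar> < r \<longrightarrow> Some x \<in> W e" if "e \<in> G" for e
    proof -
      have "open (Some -` W e)" "q e \<in> Some -` W e" using Wo[of e] yW[of e] q that
        unfolding P1_open_def by auto
      then obtain r where "r > 0" "\<forall>x. dist x (q e) < r \<longrightarrow> x \<in> Some -` W e"
        unfolding open_dist by blast
      then show ?thesis by (auto simp: dist_real_def)
    qed
    then have ex: "\<forall>e\<in>G. \<exists>r>0. (\<forall>x. \<bar>x - q e\<bar> < r \<longrightarrow> Some x \<in> W e) \<and> (e \<notin> F \<longrightarrow> \<bar>q e\<bar> \<ge> r)"
    proof -
      assume H: "\<And>e. e \<in> G \<Longrightarrow> \<exists>r>0. \<forall>x. \<bar>x - q e\<bar> < r \<longrightarrow> Some x \<in> W e"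
      show ?thesis
      proof
        fix e assume e: "e \<in> G"
        obtain r where r: "r > 0" "\<forall>x. \<bar>x - q e\<bar> < r \<longrightarrow> Some x \<in> W e" using H[OF e] by blast
        show "\<exists>r>0. (\<forall>x. \<bar>x - q e\<bar> < r \<longrightarrow> Some x \<in> W e) \<and> (e \<notin> F \<longrightarrow> \<bar>q e\<bar> \<ge> r)"
        proof (cases "e \<in> F")
          case True then show ?thesis using r by blast
        next
          case False
          then have "\<bar>q e\<bar> > 0" using qS e by auto
          then show ?thesis using r False
            by (intro exI[of _ "min r \<bar>q e\<bar>"]) auto
        qed
      qed
    qed
    have mono: "(\<forall>x. \<bar>x - q e\<bar> < s \<longrightarrow> Some x \<in> W e) \<and> (e \<notin> F \<longrightarrow> \<bar>q e\<bar> \<ge> s)"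
      if "(\<forall>x. \<bar>x - q e\<bar> < r \<longrightarrow> Some x \<in> W e) \<and> (e \<notin> F \<longrightarrow> \<bar>q e\<bar> \<ge> r)" "0 < s" "s \<le> r" for e r s
      using that by auto
    have "\<exists>\<rho>>0. \<forall>e\<in>G. (\<forall>x. \<bar>x - q e\<bar> < \<rho> \<longrightarrow> Some x \<in> W e) \<and> (e \<notin> F \<longrightarrow> \<bar>q e\<bar> \<ge> \<rho>)"
      by (rule finite_choice_pos[OF finite ex]) (rule mono; assumption)
    then obtain \<rho> where \<rho>: "\<rho> > 0" "\<forall>e\<in>G. (\<forall>x. \<bar>x - q e\<bar> < \<rho> \<longrightarrow> Some x \<in> W e) \<and> (e \<notin> F \<longrightarrow> \<bar>q e\<bar> \<ge> \<rho>)"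
      by blast
    have "\<forall>e\<in>-G. \<exists>R. \<forall>x. R < \<bar>x\<bar> \<longrightarrow> Some x \<in> W e"
    proof
      fix e assume "e \<in> -G"
      then have "None \<in> W e" using yW[of e] yI by auto
      then show "\<exists>R. \<forall>x. R < \<bar>x\<bar> \<longrightarrow> Some x \<in> W e" using Wo[of e] unfolding P1_open_def by blast
    qed
    then have "\<exists>Rf. \<forall>e\<in>-G. \<forall>x. Rf e < \<bar>x\<bar> \<longrightarrow> Some x \<in> W e" by (rule bchoice)
    then obtain Rf where Rf: "\<forall>e\<in>-G. \<forall>x. Rf e < \<bar>x\<bar> \<longrightarrow> Some x \<in> W e" by blast
    define R where "R = (\<Sum>e\<in>UNIV. \<bar>Rf e\<bar>)"
    have R0: "R \<ge> 0" unfolding R_def by (simp add: sum_nonneg)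
    have R1: "\<bar>Rf e\<bar> \<le> R" for e unfolding R_def by (rule member_le_sum) auto
    have R: "R \<ge> 0" "\<And>e. Rf e \<le> R" using R0 R1 abs_ge_self order.trans by blast+
    define M where "M = (\<Sum>e\<in>UNIV. \<bar>t e\<bar>)"
    have M: "M \<ge> 0" "\<And>e. \<bar>t e\<bar> \<le> M"
      unfolding M_def by (simp add: sum_nonneg, rule member_le_sum, auto)
    define \<epsilon> where "\<epsilon> = \<rho> / (2 * (M + 1))"
    have \<epsilon>: "\<epsilon> > 0" using \<rho> M unfolding \<epsilon>_def by auto
    have \<epsilon>t: "\<bar>\<epsilon> * t e\<bar> < \<rho>" for e
    proof -
      have "\<bar>\<epsilon> * t e\<bar> = \<epsilon> * \<bar>t e\<bar>" using \<epsilon> by (simp add: abs_mult)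
      also have "\<dots> \<le> \<epsilon> * M" using \<epsilon> M(2)[of e] by (simp add: mult_left_mono)
      also have "\<dots> < \<rho>"
      proof -
        have "M * \<rho> \<ge> 0" using \<rho> M by simp
        then have "0 < M * \<rho> + \<rho> * 2" using \<rho> by linarith
        then show ?thesis using \<rho> M unfolding \<epsilon>_def by (simp add: field_simps)
      qed
      finally show ?thesis .
    qed
    define Q where "Q = (\<Sum>e\<in>UNIV. \<bar>q e\<bar>)"
    have Q: "\<And>e. \<bar>q e\<bar> \<le> Q" unfolding Q_def by (auto intro!: member_le_sum)
    have "\<exists>\<mu>>0. \<forall>e\<in>-G. \<bar>g e\<bar> \<ge> \<mu>"
    proof (rule finite_choice_pos[of "-G" "\<lambda>e r. \<bar>g e\<bar> \<ge> r"])
      show "\<forall>e\<in>- G. \<exists>r>0. r \<le> \<bar>g e\<bar>"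
      proof
        fix e assume "e \<in> -G"
        then have "g e \<noteq> 0" using g(2) by auto
        then show "\<exists>r>0. r \<le> \<bar>g e\<bar>" by (intro exI[of _ "\<bar>g e\<bar>"]) auto
      qed
    qed auto
    then obtain \<mu> where \<mu>: "\<mu> > 0" "\<forall>e\<in>-G. \<bar>g e\<bar> \<ge> \<mu>" by blast
    define K where "K = R + Q + \<rho> + 1"
    define lam where "lam = K / \<mu>"
    have K: "K > 0" using R \<rho> Q[of undefined] unfolding K_def by linarith
    have lamg: "lam * \<bar>g e\<bar> \<ge> K" if "e \<notin> G" for e
    proof -
      have "K = lam * \<mu>" using \<mu> unfolding lam_def by simp
      also have "\<dots> \<le> lam * \<bar>g e\<bar>" using \<mu> that K unfolding lam_def by (intro mult_left_mono) auto
      finally show ?thesis .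
    qed
    have lampos: "lam > 0" using K \<mu> unfolding lam_def by simp
    define w where "w = (\<lambda>e. q e + \<epsilon> * t e + lam * g e)"
    have wV: "w \<in> V"
    proof -
      have "(\<lambda>e. \<epsilon> * t e) \<in> V" "(\<lambda>e. lam * g e) \<in> V" using lin t g unfolding lin_subspace_def by auto
      then have "(\<lambda>e. q e + \<epsilon> * t e) \<in> V" using lin q unfolding lin_subspace_def by auto
      then show ?thesis using lin \<open>(\<lambda>e. lam * g e) \<in> V\<close> unfolding lin_subspace_def w_def by auto
    qed
    have far: "\<bar>w e\<bar> > R \<and> sgn_of (w e) = T' e" if e: "e \<notin> G" for e
    proof -
      have "\<bar>q e + \<epsilon> * t e\<bar> \<le> Q + \<rho>" using Q[of e] \<epsilon>t[of e] by linarith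
      also have "\<dots> < \<bar>lam * g e\<bar>" using lamg[OF e] lampos R unfolding K_def by (simp add: abs_mult)
      finally have lt: "\<bar>q e + \<epsilon> * t e\<bar> < \<bar>lam * g e\<bar>" .
      have "w e = lam * g e + (q e + \<epsilon> * t e)" unfolding w_def by simp
      then have "sgn_of (w e) = sgn_of (lam * g e)" using sgn_of_add_small[OF lt] by simp
      also have "\<dots> = T' e" using sgn_of_scale[OF lampos] g(3)[OF e] by simp
      finally have "sgn_of (w e) = T' e" .
      moreover have "\<bar>w e\<bar> > R"
      proof -
        have "\<bar>lam * g e\<bar> \<ge> K" using lamg[OF e] lampos by (simp add: abs_mult)
        moreover have "\<bar>w e\<bar> \<ge> \<bar>lam * g e\<bar> - \<bar>q e + \<epsilon> * t e\<bar>" unfolding w_def by linarith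
        ultimately show ?thesis using \<open>\<bar>q e + \<epsilon> * t e\<bar> \<le> Q + \<rho>\<close> unfolding K_def by linarith
      qed
      ultimately show ?thesis by blast
    qed
    have near: "w e = q e + \<epsilon> * t e" if "e \<in> G" for e using g(2) that unfolding w_def by simp
    have sw: "sign_map w = T'"
    proof
      fix e show "sign_map w e = T' e"
      proof (cases "e \<in> G")
        case False then show ?thesis using far unfolding sign_map_def by blast
      next
        case True
        show ?thesis
        proof (cases "e \<in> F")
          case True
          then have "w e = \<epsilon> * t e" using near qF FG by auto
          then have "sign_map w e = sgn_of (t e)" using sgn_of_scale[OF \<epsilon>, of "t e"] by (simp add: sign_map_def)
          also have "\<dots> = T' e" using t(2) by (simp add: sign_map_def fun_eq_iff)
          finally show ?thesis .
        next
          case False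
          then have "\<bar>q e\<bar> \<ge> \<rho>" using \<rho>(2) \<open>e \<in> G\<close> by blast
          then have lt: "\<bar>\<epsilon> * t e\<bar> < \<bar>q e\<bar>" using \<epsilon>t[of e] by linarith
          have "sign_map w e = sgn_of (q e + \<epsilon> * t e)" using near[OF \<open>e \<in> G\<close>] by (simp add: sign_map_def)
          also have "\<dots> = sgn_of (q e)" by (rule sgn_of_add_small[OF lt])
          also have "\<dots> = T' e" using qS \<open>e \<in> G\<close> False by blast
          finally show ?thesis .
        qed
      qed
    qed
    have "(\<lambda>e. Some (w e)) \<in> Pi\<^sub>E UNIV W"
    proof (simp add: PiE_iff, intro allI)
      fix e show "Some (w e) \<in> W e"
      proof (cases "e \<in> G")
        case True
        have "\<bar>w e - q e\<bar> < \<rho>" using near[OF True] \<epsilon>t[of e] by simp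
        then show ?thesis using \<rho>(2) True by blast
      next
        case False
        have "\<bar>w e\<bar> > Rf e" using far[OF False] R(2)[of e] by linarith
        then show ?thesis using Rf False by blast
      qed
    qed
    then show "\<exists>z. z \<in> (\<lambda>v e. Some (v e)) ` {v \<in> V. sign_map v = T'} \<and> z \<in> U"
      using W(3) wV sw by blast
  qed
  then show ?thesis using y stratum_cond unfolding Y_open_stratum_def by blast
qed

lemma strat_char:
  assumes y: "y \<in> Y_open_stratum V T F G" and FG: "F \<subseteq> G" and nz: "\<And>e. e \<notin> F \<Longrightarrow> T e \<noteq> Zero"
  shows "(y e = Some 0 \<longleftrightarrow> e \<in> F) \<and> (y e = None \<longleftrightarrow> e \<notin> G) \<and>
    (e \<in> G - F \<longrightarrow> (T e = Pos \<longleftrightarrow> (\<exists>r>0. y e = Some r)) \<and> (T e = Neg \<longleftrightarrow> (\<exists>r<0. y e = Some r)))"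
proof -
  have yF: "\<forall>e\<in>F. y e = Some 0"
    and yP: "\<forall>e\<in>(G-F)\<inter>pos_part T. \<exists>r>0. y e = Some r"
    and yN: "\<forall>e\<in>(G-F)\<inter>neg_part T. \<exists>r<0. y e = Some r"
    and yI: "\<forall>e\<in>-G. y e = None" using y unfolding Y_open_stratum_def by auto
  show ?thesis
  proof (cases "e \<in> F")
    case True then show ?thesis using yF FG by auto
  next
    case nF: False
    show ?thesis
    proof (cases "e \<in> G")
      case False then show ?thesis using yI nF by auto
    next
      case True
      have "T e = Pos \<or> T e = Neg" using nz[OF nF] by (cases "T e") auto
      then show ?thesis
      proof
        assume P: "T e = Pos"
        then obtain r where "r > 0" "y e = Some r" using yP True nF unfolding pos_part_def by auto
        then show ?thesis using P True nF by auto
      next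
        assume P: "T e = Neg"
        then obtain r where "r < 0" "y e = Some r" using yN True nF unfolding neg_part_def by auto
        then show ?thesis using P True nF by auto
      qed
    qed
  qed
qed

theorem lemma5p3:
  fixes V :: "('e::finite \<Rightarrow> real) set"
    and F G F' G' :: "'e set" and T T' :: "'e \<Rightarrow> sign"
  assumes "lin_subspace V"
    and "admissible_triple V (F, G, T)"
    and "admissible_triple V (F', G', T')"
  shows "(Y_open_stratum V T F G \<inter> Y_open_stratum V T' F' G' \<noteq> {}
            \<longrightarrow> triple_equiv (F, G, T) (F', G', T'))
       \<and> (triple_equiv (F, G, T) (F', G', T')
            \<longrightarrow> Y_open_stratum V T F G = Y_open_stratum V T' F' G')"
proof -
  have A: "is_tope V T" "F \<subseteq> G" "rel_acyclic V T F" "rel_acyclic V T G"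
    using assms(2) unfolding admissible_triple_def by auto
  have B: "is_tope V T'" "F' \<subseteq> G'" "rel_acyclic V T' F'" "rel_acyclic V T' G'"
    using assms(3) unfolding admissible_triple_def by auto
  obtain x1 where nz: "\<And>e. e \<notin> F \<Longrightarrow> T e \<noteq> Zero" using racyc[OF A(3)] by metis
  obtain x2 where nz': "\<And>e. e \<notin> F' \<Longrightarrow> T' e \<noteq> Zero" using racyc[OF B(3)] by metis
  have P1: "triple_equiv (F, G, T) (F', G', T')"
    if ne: "Y_open_stratum V T F G \<inter> Y_open_stratum V T' F' G' \<noteq> {}"
  proof -
    obtain y where y1: "y \<in> Y_open_stratum V T F G" and y2: "y \<in> Y_open_stratum V T' F' G'"
      using ne by blast
    note c1 = strat_char[OF y1 A(2) nz] and c2 = strat_char[OF y2 B(2) nz']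
    have FF: "F = F'" using c1 c2 by blast
    have GG: "G = G'" using c1 c2 by blast
    have "T e = T' e" if e: "e \<in> G - F" for e
    proof -
      have e': "e \<in> G' - F'" using e FF GG by simp
      have "T e \<noteq> Zero" "T' e \<noteq> Zero" using e e' nz nz' by auto
      moreover have "T e = Pos \<longleftrightarrow> T' e = Pos" using c1[of e] c2[of e] e e' by blast
      ultimately show ?thesis by (cases "T e"; cases "T' e") auto
    qed
    then show ?thesis unfolding triple_equiv_def using FF GG by simp
  qed
  have P2: "Y_open_stratum V T F G = Y_open_stratum V T' F' G'"
    if eqv: "triple_equiv (F, G, T) (F', G', T')"
  proof -
    have FF: "F' = F" and GG: "G' = G" and eq: "\<forall>e\<in>G - F. T e = T' e"
      using eqv unfolding triple_equiv_def by auto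
    have eq': "\<forall>e\<in>G - F. T' e = T e" using eq by simp
    have aF': "rel_acyclic V T' F" and aG': "rel_acyclic V T' G" using B FF GG by auto
    show ?thesis unfolding FF GG
    proof
      show "Y_open_stratum V T F G \<subseteq> Y_open_stratum V T' F G"
        using move[OF assms(1) B(1) A(3) aG' A(2) eq] by blast
      show "Y_open_stratum V T' F G \<subseteq> Y_open_stratum V T F G"
        using move[OF assms(1) A(1) aF' A(4) A(2) eq'] by blast
    qed
  qed
  show ?thesis using P1 P2 by blast
qed

end
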